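(* Let $m,n\ge2$, $W$ a channel from $\{1,\dots,m\}$ to $\{1,\dots,n\}$, and $\lambda\in\Lambda(W)$ with $C_{11}(\lambda)=\overline{C}_{11}(W)$. Then $P_\lambda(1)=\underline{P}_W(1)$. In particular, if $\underline{P}_W(1)>0$, then $\lambda_{\mathrm{U}_\ell}=\underline{P}_W(1)$ and $P_\lambda(2)=1-\underline{P}_W(1)$, where $\ell$ is an index maximizing $(\mathbf{1}W)_j$ over $1\le j\le n$.
   Context: A channel is a row-stochastic matrix; $\mathcal{D}$ is the set of deterministic (0-1) channels from $\{1,\dots,m\}$ to $\{1,\dots,n\}$, $\mathrm{rank}(D)$ the matrix rank, and $\mathrm{U}_j$ the deterministic channel with $j$-th column all ones. $\Lambda(W)=\{\lambda\text{ probability distribution on }\mathcal{D}: W=\sum_D\lambda_DD\}$, $C_{11}(\lambda)=\sum_D\lambda_D\log_2\mathrm{rank}(D)$, $\overline{C}_{11}(W)=\sup_{\lambda\in\Lambda(W)}C_{11}(\lambda)$. $P_\lambda(r)=\lambda(\{D:\mathrm{rank}(D)=r\})$, $\underline{P}_W(r)=\min_{\lambda\in\Lambda(W)}P_\lambda(r)$. $\mathbf{1}$ is the all-one row vector of length $m$. *)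

theory Defs
  imports "HOL-Analysis.Analysis"
begin

text \<open>Channels from the input alphabet 'm to the output alphabet 'n are
  matrices W :: real^'n^'m (rows indexed by inputs), W$i$j = probability of output j
  given input i.\<close>

definition channel :: "real^'n^'m \<Rightarrow> bool" where
  "channel W \<longleftrightarrow> (\<forall>i j. 0 \<le> W$i$j) \<and> (\<forall>i. (\<Sum>j\<in>UNIV. W$i$j) = 1)"

definition det_channels :: "(real^'n^'m) set" where
  "det_channels = {D. \<forall>i. \<exists>j. D$i = axis j 1}"

definition Uch :: "'n \<Rightarrow> real^'n^'m" where
  "Uch j = (\<chi> i. axis j 1)"

definition det_dist :: "(real^'n^'m \<Rightarrow> real) \<Rightarrow> bool" where
  "det_dist lam \<longleftrightarrow> (\<forall>D. 0 \<le> lam D) \<and> (\<forall>D. D \<notin> det_channels \<longrightarrow> lam D = 0)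
     \<and> (\<Sum>D\<in>det_channels. lam D) = 1"

definition Lambda :: "real^'n^'m \<Rightarrow> (real^'n^'m \<Rightarrow> real) set" where
  "Lambda W = {lam. det_dist lam \<and> W = (\<Sum>D\<in>det_channels. lam D *\<^sub>R D)}"

definition C11 :: "(real^'n^'m \<Rightarrow> real) \<Rightarrow> real" where
  "C11 lam = (\<Sum>D\<in>det_channels. lam D * log 2 (real (rank D)))"

definition C11bar :: "real^'n^'m \<Rightarrow> real" where
  "C11bar W = Sup (C11 ` Lambda W)"

definition Plam :: "(real^'n^'m \<Rightarrow> real) \<Rightarrow> nat \<Rightarrow> real" where
  "Plam lam r = (\<Sum>D\<in>{D\<in>det_channels. rank D = r}. lam D)"

definition Plow :: "real^'n^'m \<Rightarrow> nat \<Rightarrow> real" where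
  "Plow W r = Inf ((\<lambda>lam. Plam lam r) ` Lambda W)"

definition colsum :: "real^'n^'m \<Rightarrow> 'n \<Rightarrow> real" where
  "colsum W j = (\<Sum>i\<in>UNIV. W$i$j)"

end

theory Submission imports Defs begin

definition Mf :: "('m \<Rightarrow> 'n) \<Rightarrow> real^'n^'m" where
  "Mf f = (\<chi> i. axis (f i) 1)"

lemma Mf_nth[simp]: "Mf f $ i $ j = (if f i = j then 1 else 0)"
  by (simp add: Mf_def axis_def)

lemma axis1_inj: "(axis j (1::real) = axis k 1) \<longleftrightarrow> j = k"
  by (simp add: axis_eq_axis)

lemma Mf_inj: "inj Mf"
proof (rule injI)
  fix f g :: "'a \<Rightarrow> 'b" assume "Mf f = Mf g"
  then have "\<forall>i. axis (f i) (1::real) = axis (g i) 1" by (metis Mf_def vec_lambda_beta)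
  then show "f = g" using axis1_inj by blast
qed

lemma det_channels_eq: "det_channels = range Mf"
  unfolding det_channels_def Mf_def
proof (auto, goal_cases)
  case (1 D)
  then obtain f where "\<forall>i. D $ i = axis (f i) 1" by metis
  then have "D = (\<chi> i. axis (f i) 1)" by (simp add: vec_eq_iff)
  then show ?case by blast
qed

lemma finite_det: "finite (det_channels :: (real^'n^'m) set)"
  unfolding det_channels_eq by simp

lemma rank_Mf: "rank (Mf f) = card (range f)"
proof -
  have "rows (Mf f) = (\<lambda>j. axis j (1::real)) ` range f"
    by (auto simp: rows_def row_def Mf_def)
  moreover have "vec.independent ((\<lambda>j. axis j (1::real)) ` range f)"
    by (rule vec.independent_mono[OF vec.independent_Basis]) (auto simp: cart_basis_def)
  moreover have "inj (\<lambda>j. axis j (1::real))" using axis1_inj by (auto intro: injI)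
  ultimately show ?thesis
    unfolding row_rank_def_gen
    by (simp add: vec.dim_eq_card_independent card_image inj_on_def axis1_inj)
qed

lemma Uch_Mf: "Uch j = Mf (\<lambda>_. j)"
  by (simp add: Uch_def Mf_def)

lemma ex_other:
  assumes "CARD('m::finite) \<ge> 2" shows "\<exists>k::'m. k \<noteq> i"
proof (rule ccontr)
  assume "\<not> ?thesis"
  then have "(UNIV::'m set) = {i}" by auto
  then have "CARD('m) = card {i}" by (metis)
  then show False using assms by simp
qed

lemma det_Mf: "Mf f \<in> det_channels"
  by (simp add: det_channels_eq)

lemma det_obtain: assumes "D \<in> det_channels" obtains f where "D = Mf f"
  using assms by (auto simp: det_channels_eq)

lemma pert_sum:
  fixes \<phi> :: "'a \<Rightarrow> 'b::real_vector"
  assumes "finite S" "E \<in> S" "E' \<in> S" "U \<in> S" "D \<in> S"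
  shows "(\<Sum>x\<in>S. (l x + e * ((if x = E then 1 else 0) + (if x = E' then 1 else 0)
     - (if x = U then 1 else 0) - (if x = D then 1 else 0))) *\<^sub>R \<phi> x)
   = (\<Sum>x\<in>S. l x *\<^sub>R \<phi> x) + e *\<^sub>R (\<phi> E + \<phi> E' - \<phi> U - \<phi> D)"
proof -
  have d: "(\<Sum>x\<in>S. (e * (if x = X then 1 else 0)) *\<^sub>R \<phi> x) = e *\<^sub>R \<phi> X" if "X \<in> S" for X
  proof -
    have "(\<Sum>x\<in>S. (e * (if x = X then 1 else 0)) *\<^sub>R \<phi> x) = (\<Sum>x\<in>S. if x = X then e *\<^sub>R \<phi> X else 0)"
      by (rule sum.cong) auto
    also have "\<dots> = e *\<^sub>R \<phi> X" using that assms(1) by simp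
    finally show ?thesis .
  qed
  show ?thesis
    using assms d
    by (simp add: algebra_simps sum.distrib sum_subtractf)
qed

lemma cnt_Mf: "(\<Sum>i\<in>UNIV. Mf f $ i $ j) = real (card {i. f i = j})"
  by (simp add: sum.inter_filter[symmetric])

lemma Lambda_D:
  assumes "l \<in> Lambda W"
  shows "\<And>D. 0 \<le> l D" "\<And>D. D \<notin> det_channels \<Longrightarrow> l D = 0"
    "(\<Sum>D\<in>det_channels. l D) = 1" "W = (\<Sum>D\<in>det_channels. l D *\<^sub>R D)"
  using assms by (auto simp: Lambda_def det_dist_def)

lemma colsum_formula:
  assumes "l \<in> Lambda W"
  shows "colsum W j = (\<Sum>D\<in>det_channels. l D * (\<Sum>i\<in>UNIV. D $ i $ j))"
proof -
  have "colsum W j = (\<Sum>i\<in>UNIV. \<Sum>D\<in>det_channels. l D * D $ i $ j)"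
    unfolding colsum_def by (subst Lambda_D(4)[OF assms]) simp
  also have "\<dots> = (\<Sum>D\<in>det_channels. l D * (\<Sum>i\<in>UNIV. D $ i $ j))"
    by (subst sum.swap) (simp add: sum_distrib_left)
  finally show ?thesis .
qed

lemma cnt_bound:
  "real (card {i::'m. f i = j}) \<le> real CARD('m::finite) - 1 + (if Mf f = Uch j then 1 else 0)"
proof (cases "f = (\<lambda>_. j)")
  case True
  then show ?thesis by (simp add: Uch_Mf)
next
  case False
  then obtain i where "f i \<noteq> j" by auto
  then have "{i. f i = j} \<subseteq> UNIV - {i}" by auto
  then have "card {i. f i = j} \<le> card (UNIV - {i::'m})" by (rule card_mono[rotated]) simp
  also have "\<dots> = CARD('m) - 1" by (simp add: card_Diff_singleton)
  finally have c: "card {i. f i = j} \<le> CARD('m) - 1" .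
  have "0 < CARD('m)" by simp
  then have "real (CARD('m) - 1) = real CARD('m) - 1" by (simp add: of_nat_diff)
  then have "real (card {i. f i = j}) \<le> real CARD('m) - 1"
    using c by (metis of_nat_le_iff)
  then show ?thesis by simp
qed

lemma rank_Uch: "rank (Uch j :: real^'n^'m) = 1"
  by (simp add: Uch_Mf rank_Mf)

lemma Uch_det: "Uch j \<in> det_channels"
  by (simp add: Uch_Mf det_Mf)

lemma lower_bound:
  fixes W :: "real^'n^'m"
  assumes "l \<in> Lambda W"
  shows "colsum W j \<le> real CARD('m) - 1 + l (Uch j)"
proof -
  have "colsum W j = (\<Sum>D\<in>det_channels. l D * (\<Sum>i\<in>UNIV. D $ i $ j))"
    by (rule colsum_formula[OF assms])
  also have "\<dots> \<le> (\<Sum>D\<in>det_channels. l D * (real CARD('m) - 1 + (if D = Uch j then 1 else 0)))"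
  proof (rule sum_mono)
    fix D :: "real^'n^'m" assume "D \<in> det_channels"
    then obtain f where f: "D = Mf f" by (rule det_obtain)
    show "l D * (\<Sum>i\<in>UNIV. D $ i $ j) \<le> l D * (real CARD('m) - 1 + (if D = Uch j then 1 else 0))"
      unfolding f cnt_Mf by (rule mult_left_mono[OF cnt_bound Lambda_D(1)[OF assms]])
  qed
  also have "\<dots> = (real CARD('m) - 1) * (\<Sum>D\<in>det_channels. l D) + (\<Sum>D\<in>det_channels. if D = Uch j then l D else 0)"
  proof -
    have "\<And>D. l D * (real CARD('m) - 1 + (if D = Uch j then 1 else 0))
       = (real CARD('m) - 1) * l D + (if D = Uch j then l D else 0)"
      by (simp add: algebra_simps)
    then show ?thesis by (simp add: sum.distrib sum_distrib_left)
  qed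
  also have "\<dots> = real CARD('m) - 1 + l (Uch j)"
    using Lambda_D(3)[OF assms] by (simp add: finite_det Uch_det)
  finally show ?thesis .
qed

lemma Plam_nonneg: "l \<in> Lambda W \<Longrightarrow> 0 \<le> Plam l r"
  unfolding Plam_def by (rule sum_nonneg) (simp add: Lambda_D(1))

lemma Uch_le_Plam:
  fixes W :: "real^'n^'m"
  assumes "l \<in> Lambda W" shows "l (Uch j) \<le> Plam l 1"
  unfolding Plam_def
  by (rule member_le_sum) (auto simp: Uch_det rank_Uch Lambda_D(1)[OF assms] finite_det)

lemma C11_bound:
  fixes W :: "real^'n^'m"
  assumes "l \<in> Lambda W"
  shows "C11 l \<le> (\<Sum>D\<in>(det_channels::(real^'n^'m) set). \<bar>log 2 (real (rank D))\<bar>)"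
  unfolding C11_def
proof (rule sum_mono)
  fix D :: "real^'n^'m" assume D: "D \<in> det_channels"
  have "l D \<le> (\<Sum>D\<in>det_channels. l D)"
    by (rule member_le_sum) (auto simp: D finite_det Lambda_D(1)[OF assms])
  then have le1: "l D \<le> 1" using Lambda_D(3)[OF assms] by simp
  have "l D * log 2 (real (rank D)) \<le> l D * \<bar>log 2 (real (rank D))\<bar>"
    by (rule mult_left_mono) (auto simp: Lambda_D(1)[OF assms])
  also have "\<dots> \<le> 1 * \<bar>log 2 (real (rank D))\<bar>"
    by (rule mult_right_mono) (auto simp: le1)
  finally show "l D * log 2 (real (rank D)) \<le> \<bar>log 2 (real (rank D))\<bar>" by simp
qed

lemma C11_max:
  fixes W :: "real^'n^'m"
  assumes "lam \<in> Lambda W" "C11 lam = C11bar W" "l \<in> Lambda W"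
  shows "C11 l \<le> C11 lam"
  unfolding assms(2) C11bar_def
proof (rule cSup_upper)
  show "C11 l \<in> C11 ` Lambda W" using assms(3) by simp
  show "bdd_above (C11 ` Lambda W)"
    by (rule bdd_aboveI2[where M="\<Sum>D\<in>(det_channels::(real^'n^'m) set). \<bar>log 2 (real (rank D))\<bar>"])
      (rule C11_bound)
qed

lemma card_range_upd: fixes h :: "'m::finite \<Rightarrow> 'n" shows "card (range h) \<le> card (range (h(i:=a))) + 1"
proof -
  have "range h \<subseteq> insert (h i) (range (h(i:=a)))" by auto
  then have "card (range h) \<le> card (insert (h i) (range (h(i:=a))))"
    by (rule card_mono[rotated]) simp
  also have "\<dots> \<le> card (range (h(i:=a))) + 1" by (simp add: card_insert_le_m1 card_insert_if)
  finally show ?thesis .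
qed

lemma exchange:
  fixes W :: "real^'n^'m" and h :: "'m \<Rightarrow> 'n"
  assumes m2: "CARD('m) \<ge> 2" and lam: "lam \<in> Lambda W"
    and max: "\<And>l. l \<in> Lambda W \<Longrightarrow> C11 l \<le> C11 lam"
    and pa: "lam (Mf (\<lambda>_. a)) > 0" and ph: "lam (Mf h) > 0" and hi: "h i \<noteq> a"
  shows "\<forall>k. k \<noteq> i \<longrightarrow> h k = a"
proof -
  define U where "U = Mf (\<lambda>_::'m. a)"
  define D where "D = Mf h"
  define E where "E = Mf ((\<lambda>_::'m. a)(i := h i))"
  define E' where "E' = Mf (h(i := a))"
  have UD: "U \<noteq> D"
  proof
    assume "U = D"
    then have "(\<lambda>_. a) = h" using Mf_inj unfolding U_def D_def by (metis injD)
    then show False using hi by auto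
  qed
  define e where "e = min (lam U) (lam D)"
  have e0: "e > 0" using pa ph by (simp add: e_def U_def D_def)
  define l where "l = (\<lambda>x. lam x + e * ((if x = E then 1 else 0) + (if x = E' then 1 else 0)
     - (if x = U then 1 else 0) - (if x = D then 1 else 0)))"
  have mem: "E \<in> det_channels" "E' \<in> det_channels" "U \<in> det_channels" "D \<in> det_channels"
    by (auto simp: E_def E'_def U_def D_def det_Mf)
  note ps = pert_sum[OF finite_det mem, of _ e]
  have "l \<in> Lambda W"
  proof -
    have nn: "0 \<le> l x" for x
    proof -
      have "lam U \<ge> e" "lam D \<ge> e" "lam x \<ge> 0" using Lambda_D(1)[OF lam] by (auto simp: e_def)
      then show ?thesis using UD e0 unfolding l_def by auto
    qed
    have out: "l x = 0" if "x \<notin> det_channels" for x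
      using that mem Lambda_D(2)[OF lam that] unfolding l_def by auto
    have s1: "(\<Sum>x\<in>det_channels. l x) = 1"
      using ps[of lam "\<lambda>_. 1::real"] Lambda_D(3)[OF lam] unfolding l_def by (simp add: real_scaleR_def)
    have EE: "E + E' = U + D"
      by (simp add: E_def E'_def U_def D_def vec_eq_iff)
    have s2: "W = (\<Sum>x\<in>det_channels. l x *\<^sub>R x)"
    proof -
      have "(\<Sum>x\<in>det_channels. l x *\<^sub>R x) = (\<Sum>x\<in>det_channels. lam x *\<^sub>R x) + e *\<^sub>R (E + E' - U - D)"
        using ps[of lam "\<lambda>x. x"] unfolding l_def by simp
      also have "E + E' - U - D = 0" using EE by (simp add: algebra_simps)
      finally show ?thesis using Lambda_D(4)[OF lam] by simp
    qed
    show ?thesis using nn out s1 s2 by (simp add: Lambda_def det_dist_def)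
  qed
  then have le: "C11 l \<le> C11 lam" by (rule max)
  have "C11 l = C11 lam + e * (log 2 (real (rank E)) + log 2 (real (rank E'))
      - log 2 (real (rank U)) - log 2 (real (rank D)))"
    using ps[of lam "\<lambda>x. log 2 (real (rank x))"] unfolding l_def C11_def by simp
  with le have "e * (log 2 (real (rank E)) + log 2 (real (rank E'))
      - log 2 (real (rank U)) - log 2 (real (rank D))) \<le> 0" by linarith
  with e0 have "log 2 (real (rank E)) + log 2 (real (rank E'))
      - log 2 (real (rank U)) - log 2 (real (rank D)) \<le> 0" by (simp add: mult_le_0_iff)
  then have key: "log 2 (real (rank E)) + log 2 (real (rank E')) \<le> log 2 (real (rank U)) + log 2 (real (rank D))"
    by linarith
  obtain k0 where k0: "k0 \<noteq> i" using ex_other[OF m2] by blast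
  have "range ((\<lambda>_::'m. a)(i := h i)) = {a, h i}"
    using k0 by (auto simp: image_def)
  then have rE: "rank E = 2" using hi by (simp add: E_def rank_Mf)
  have rU: "rank U = 1" by (simp add: U_def rank_Mf)
  define r where "r = card (range h)"
  define r' where "r' = card (range (h(i:=a)))"
  have rD: "rank D = r" by (simp add: D_def rank_Mf r_def)
  have rE': "rank E' = r'" by (simp add: E'_def rank_Mf r'_def)
  have rr: "r \<le> r' + 1" unfolding r_def r'_def by (rule card_range_upd)
  have "0 < card (range (h(i:=a)))" by (rule card_gt_0_iff[THEN iffD2]) auto
  then have r'1: "r' \<ge> 1" unfolding r'_def by linarith
  have key2: "1 + log 2 (real r') \<le> log 2 (real r)"
    using key rE rU rD rE' by simp
  have "r' = 1"
  proof (rule ccontr)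
    assume "r' \<noteq> 1"
    then have "r' \<ge> 2" using r'1 by simp
    then have "real r < 2 * real r'" using rr by linarith
    moreover have "0 < real r"
    proof -
      have "0 < card (range h)" by (rule card_gt_0_iff[THEN iffD2]) auto
      then show ?thesis unfolding r_def by simp
    qed
    ultimately have "log 2 (real r) < log 2 (2 * real r')" by simp
    also have "\<dots> = 1 + log 2 (real r')" using r'1 by (simp add: log_mult)
    finally show False using key2 by simp
  qed
  moreover have "a \<in> range (h(i:=a))" by auto
  ultimately have "range (h(i:=a)) = {a}" unfolding r'_def by (metis card_1_singletonE singletonD)
  then show ?thesis by (metis fun_upd_other rangeI singletonD)
qed

theorem proposition8:
  fixes W :: "real^'n^'m" and lam :: "real^'n^'m \<Rightarrow> real"
  assumes "CARD('m) \<ge> 2" and "CARD('n) \<ge> 2"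
    and "channel W"
    and "lam \<in> Lambda W"
    and "C11 lam = C11bar W"
  shows "Plam lam 1 = Plow W 1 \<and>
    (Plow W 1 > 0 \<longrightarrow>
      (\<forall>l. (\<forall>j. colsum W j \<le> colsum W l) \<longrightarrow>
         lam (Uch l) = Plow W 1 \<and> Plam lam 2 = 1 - Plow W 1))"
proof -
  note m2 = assms(1) and lam = assms(4)
  have max: "\<And>l. l \<in> Lambda W \<Longrightarrow> C11 l \<le> C11 lam"
    using C11_max[OF assms(4,5)] .
  have Plow_eq: "Plow W 1 = Plam lam 1" if "\<And>l. l \<in> Lambda W \<Longrightarrow> Plam lam 1 \<le> Plam l 1"
    unfolding Plow_def by (rule cInf_eq_minimum) (use lam that in auto)
  show ?thesis
  proof (cases "Plam lam 1 = 0")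
    case True
    have "Plow W 1 = Plam lam 1"
    proof (rule Plow_eq)
      fix l assume "l \<in> Lambda W"
      then show "Plam lam 1 \<le> Plam l 1" using True Plam_nonneg[of l W 1] by linarith
    qed
    then show ?thesis using True by simp
  next
    case False
    then have "Plam lam 1 > 0" using Plam_nonneg[OF lam, of 1] by simp
    then obtain D where D: "D \<in> det_channels" "rank D = 1" "lam D > 0"
    proof -
      assume r: "\<And>D. D \<in> det_channels \<Longrightarrow> rank D = 1 \<Longrightarrow> 0 < lam D \<Longrightarrow> thesis"
      show thesis
      proof (rule ccontr)
        assume "\<not> thesis"
        then have "\<forall>D\<in>{D\<in>det_channels. rank D = 1}. lam D \<le> 0" using r by force
        then have "Plam lam 1 \<le> 0" unfolding Plam_def by (intro sum_nonpos) blast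
        then show False using \<open>Plam lam 1 > 0\<close> by simp
      qed
    qed
    obtain f where f: "D = Mf f" using D(1) by (rule det_obtain)
    have "card (range f) = 1" using D(2) by (simp add: f rank_Mf)
    then obtain a where "range f = {a}" by (metis card_1_singletonE)
    then have fa: "f = (\<lambda>_. a)" by (metis rangeI singletonD ext)
    define U where "U = Mf (\<lambda>_::'m. a)"
    have pU: "lam U > 0" using D(3) by (simp add: f fa U_def)
    have U_Uch: "U = Uch a" by (simp add: U_def Uch_Mf)
    have supp: "\<exists>i. h i \<noteq> a \<and> (\<forall>k. k \<noteq> i \<longrightarrow> h k = a)"
      if hp: "lam (Mf h) > 0" "h \<noteq> (\<lambda>_. a)" for h
    proof -
      obtain i where "h i \<noteq> a" using hp(2) by auto
      then show ?thesis using exchange[OF m2 lam max pU[unfolded U_def] hp(1)] by blast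
    qed
    have rank_supp: "rank D' = (if D' = U then 1 else 2)"
      if dp: "D' \<in> det_channels" "lam D' > 0" for D'
    proof -
      obtain h where h: "D' = Mf h" using dp(1) by (rule det_obtain)
      show ?thesis
      proof (cases "h = (\<lambda>_. a)")
        case True then show ?thesis by (simp add: h U_def rank_Mf)
      next
        case False
        then obtain i where i: "h i \<noteq> a" "\<forall>k. k \<noteq> i \<longrightarrow> h k = a"
          using supp dp(2) h by blast
        obtain k0 where k0: "k0 \<noteq> i" using ex_other[OF m2] by blast
        have "range h = {a, h i}"
          using i k0 by (auto simp: image_def)
        then have "card (range h) = 2" using i by simp
        moreover have "D' \<noteq> U" using False Mf_inj unfolding h U_def by (metis injD)
        ultimately show ?thesis by (simp add: h rank_Mf)
      qed
    qed
    have cnt_supp: "lam D' * (\<Sum>k\<in>UNIV. D' $ k $ a) = lam D' * (real CARD('m) - 1 + (if D' = U then 1 else 0))"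
      if dq: "D' \<in> det_channels" for D'
    proof (cases "lam D' > 0")
      case False
      then have "lam D' = 0" using Lambda_D(1)[OF lam, of D'] by simp
      then show ?thesis by simp
    next
      case True
      obtain h where h: "D' = Mf h" using dq by (rule det_obtain)
      show ?thesis
      proof (cases "h = (\<lambda>_. a)")
        case True then show ?thesis by (simp add: h U_def cnt_Mf)
      next
        case False
        then obtain i where i: "h i \<noteq> a" "\<forall>k. k \<noteq> i \<longrightarrow> h k = a"
          using supp True h by blast
        then have "{k. h k = a} = UNIV - {i}" by auto
        then have "card {k. h k = a} = CARD('m) - 1" by (simp add: card_Diff_singleton)
        moreover have "0 < CARD('m)" by simp
        moreover have "D' \<noteq> U" using False Mf_inj unfolding h U_def by (metis injD)
        ultimately show ?thesis unfolding h cnt_Mf by (simp add: of_nat_diff)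
      qed
    qed
    have colA: "colsum W a = real CARD('m) - 1 + lam U"
    proof -
      have "colsum W a = (\<Sum>D\<in>det_channels. lam D * (real CARD('m) - 1 + (if D = U then 1 else 0)))"
        unfolding colsum_formula[OF lam] by (rule sum.cong) (auto simp: cnt_supp)
      also have "\<dots> = (\<Sum>D\<in>det_channels. (real CARD('m) - 1) * lam D + (if D = U then lam D else 0))"
        by (rule sum.cong) (auto simp: algebra_simps)
      also have "\<dots> = real CARD('m) - 1 + lam U"
        using Lambda_D(3)[OF lam] by (simp add: sum.distrib sum_distrib_left[symmetric] finite_det U_def det_Mf)
      finally show ?thesis .
    qed
    have P1: "Plam lam 1 = lam U"
    proof -
      have "Plam lam 1 = (\<Sum>D\<in>det_channels. if rank D = 1 then lam D else 0)"
        unfolding Plam_def by (simp add: sum.inter_filter finite_det)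
      also have "\<dots> = (\<Sum>D\<in>det_channels. if D = U then lam D else 0)"
      proof (rule sum.cong)
        fix D' :: "real^'n^'m" assume D': "D' \<in> det_channels"
        show "(if rank D' = 1 then lam D' else 0) = (if D' = U then lam D' else 0)"
        proof (cases "lam D' > 0")
          case True then show ?thesis using rank_supp[OF D' True] by simp
        next
          case False
          then have "lam D' = 0" using Lambda_D(1)[OF lam, of D'] by simp
          then show ?thesis by auto
        qed
      qed simp
      also have "\<dots> = lam U" by (simp add: finite_det U_def det_Mf)
      finally show ?thesis .
    qed
    have P2: "Plam lam 2 = 1 - lam U"
    proof -
      have "Plam lam 2 = (\<Sum>D\<in>det_channels. if rank D = 2 then lam D else 0)"
        unfolding Plam_def by (simp add: sum.inter_filter finite_det)
      also have "\<dots> = (\<Sum>D\<in>det_channels. lam D - (if D = U then lam D else 0))"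
      proof (rule sum.cong)
        fix D' :: "real^'n^'m" assume D': "D' \<in> det_channels"
        show "(if rank D' = 2 then lam D' else 0) = lam D' - (if D' = U then lam D' else 0)"
        proof (cases "lam D' > 0")
          case True then show ?thesis using rank_supp[OF D' True] by simp
        next
          case False
          then have "lam D' = 0" using Lambda_D(1)[OF lam, of D'] by simp
          then show ?thesis by auto
        qed
      qed simp
      also have "\<dots> = 1 - lam U"
        using Lambda_D(3)[OF lam] by (simp add: sum_subtractf finite_det U_def det_Mf)
      finally show ?thesis .
    qed
    have minim: "Plam lam 1 \<le> Plam l 1" if "l \<in> Lambda W" for l
    proof -
      have "colsum W a \<le> real CARD('m) - 1 + l (Uch a)" by (rule lower_bound[OF that])
      then have "lam U \<le> l (Uch a)" using colA by simp
      also have "\<dots> \<le> Plam l 1" by (rule Uch_le_Plam[OF that])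
      finally show ?thesis using P1 by simp
    qed
    have PL: "Plow W 1 = lam U" using Plow_eq minim P1 by simp
    have second: "lam (Uch l) = Plow W 1 \<and> Plam lam 2 = 1 - Plow W 1"
      if lp: "\<forall>j. colsum W j \<le> colsum W l" for l
    proof -
      have "colsum W a \<le> colsum W l" using lp by simp
      also have "\<dots> \<le> real CARD('m) - 1 + lam (Uch l)" by (rule lower_bound[OF lam])
      finally have "lam U \<le> lam (Uch l)" using colA by simp
      then have pl: "lam (Mf (\<lambda>_. l)) > 0" using pU by (simp add: Uch_Mf)
      have "l = a"
      proof (rule ccontr)
        assume "l \<noteq> a"
        then have "(\<lambda>_::'m. l) \<noteq> (\<lambda>_. a)" by (metis)
        then obtain i :: 'm where "\<forall>k::'m. k \<noteq> i \<longrightarrow> l = a" using supp[OF pl] by blast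
        moreover obtain k0 where "k0 \<noteq> i" using ex_other[OF m2] by blast
        ultimately show False using \<open>l \<noteq> a\<close> by blast
      qed
      then show ?thesis using PL P2 U_Uch by simp
    qed
    show ?thesis using PL P1 second by simp
  qed
qed

end
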